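(* There is an absolute constant $c>0$ such that for every star celebrity game $\Gamma=\langle V,(w_u)_{u\in V},\alpha,\beta\rangle$ with $\beta>1$ and $W=\sum_{u\in V}w_u$, $PoA(\Gamma)\le c\,W/\alpha$.
   Context: A celebrity game $\Gamma=\langle V,(w_u)_{u\in V},\alpha,\beta\rangle$ consists of a set of players $V=\{1,\dots,n\}$, celebrity weights $w_u>0$, a link cost $\alpha>0$ and a critical distance $\beta$ with $1\le\beta\le n-1$. A strategy of player $u$ is a set $S_u\subseteq V\setminus\{u\}$; a strategy profile is $S=(S_1,\dots,S_n)$; its outcome graph $G[S]$ is the undirected graph on $V$ with edge set $\{\{u,v\}: u\in S_v\text{ or }v\in S_u\}$. With $d_G$ the graph distance (infinite between different connected components), the cost of player $u$ is $c_u(S)=\alpha|S_u|+\sum_{v:\,d_{G[S]}(u,v)>\beta}w_v$ and the social cost is $C(S)=\sum_{u\in V}c_u(S)$. $S$ is a Nash equilibrium (NE) if no player can strictly decrease its cost by changing only its own strategy. $\mathrm{opt}(\Gamma)=\min_S C(S)$ and $PoA(\Gamma)=\max_{S\text{ NE}}C(S)/\mathrm{opt}(\Gamma)$. $\Gamma$ is a star celebrity game if $G[S]$ is connected for some NE $S$. *)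

theory Defs
  imports Complex_Main
begin

definition players :: "nat \<Rightarrow> nat set" where
  "players n = {1..n}"

definition profiles :: "nat \<Rightarrow> (nat \<Rightarrow> nat set) set" where
  "profiles n = {S. \<forall>u. S u \<subseteq> (if u \<in> players n then players n - {u} else {})}"

definition adj :: "(nat \<Rightarrow> nat set) \<Rightarrow> nat \<Rightarrow> nat \<Rightarrow> bool" where
  "adj S u v \<longleftrightarrow> u \<in> S v \<or> v \<in> S u"

fun dist_le :: "(nat \<Rightarrow> nat set) \<Rightarrow> nat \<Rightarrow> nat \<Rightarrow> nat \<Rightarrow> bool" where
  "dist_le S 0 u v \<longleftrightarrow> u = v"
| "dist_le S (Suc k) u v \<longleftrightarrow> dist_le S k u v \<or> (\<exists>x. dist_le S k u x \<and> adj S x v)"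

definition player_cost ::
  "nat \<Rightarrow> (nat \<Rightarrow> real) \<Rightarrow> real \<Rightarrow> nat \<Rightarrow> (nat \<Rightarrow> nat set) \<Rightarrow> nat \<Rightarrow> real" where
  "player_cost n w \<alpha> \<beta> S u =
     \<alpha> * real (card (S u)) + (\<Sum>v \<in> {v \<in> players n. \<not> dist_le S \<beta> u v}. w v)"

definition social_cost ::
  "nat \<Rightarrow> (nat \<Rightarrow> real) \<Rightarrow> real \<Rightarrow> nat \<Rightarrow> (nat \<Rightarrow> nat set) \<Rightarrow> real" where
  "social_cost n w \<alpha> \<beta> S = (\<Sum>u \<in> players n. player_cost n w \<alpha> \<beta> S u)"

definition is_NE :: "nat \<Rightarrow> (nat \<Rightarrow> real) \<Rightarrow> real \<Rightarrow> nat \<Rightarrow> (nat \<Rightarrow> nat set) \<Rightarrow> bool" where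
  "is_NE n w \<alpha> \<beta> S \<longleftrightarrow> S \<in> profiles n \<and>
     (\<forall>u \<in> players n. \<forall>T. T \<subseteq> players n - {u} \<longrightarrow>
        player_cost n w \<alpha> \<beta> S u \<le> player_cost n w \<alpha> \<beta> (S(u := T)) u)"

definition opt :: "nat \<Rightarrow> (nat \<Rightarrow> real) \<Rightarrow> real \<Rightarrow> nat \<Rightarrow> real" where
  "opt n w \<alpha> \<beta> = Min (social_cost n w \<alpha> \<beta> ` profiles n)"

definition PoA :: "nat \<Rightarrow> (nat \<Rightarrow> real) \<Rightarrow> real \<Rightarrow> nat \<Rightarrow> real" where
  "PoA n w \<alpha> \<beta> = Max ((\<lambda>S. social_cost n w \<alpha> \<beta> S / opt n w \<alpha> \<beta>) ` {S. is_NE n w \<alpha> \<beta> S})"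

definition outcome_connected :: "nat \<Rightarrow> (nat \<Rightarrow> nat set) \<Rightarrow> bool" where
  "outcome_connected n S \<longleftrightarrow> (\<forall>u \<in> players n. \<forall>v \<in> players n. \<exists>k. dist_le S k u v)"

definition star_game :: "nat \<Rightarrow> (nat \<Rightarrow> real) \<Rightarrow> real \<Rightarrow> nat \<Rightarrow> bool" where
  "star_game n w \<alpha> \<beta> \<longleftrightarrow> (\<exists>S. is_NE n w \<alpha> \<beta> S \<and> outcome_connected n S)"

definition celebrity_game :: "nat \<Rightarrow> (nat \<Rightarrow> real) \<Rightarrow> real \<Rightarrow> nat \<Rightarrow> bool" where
  "celebrity_game n w \<alpha> \<beta> \<longleftrightarrow>
     (\<forall>u \<in> players n. w u > 0) \<and> \<alpha> > 0 \<and> 1 \<le> \<beta> \<and> \<beta> \<le> n - 1"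

end

theory Submission
  imports Defs "HOL-Library.FuncSet"
begin

lemma dist_refl: "dist_le S k u u"
  by (induction k) auto

lemma dist_iso:
  assumes "\<forall>x. \<not> adj S u x" shows "dist_le S k u v \<Longrightarrow> v = u"
  using assms by (induction k arbitrary: v) (auto simp: adj_def)

lemma dist_iso2:
  assumes "\<forall>x. \<not> adj S u x" shows "dist_le S k v u \<Longrightarrow> v = u"
  using assms by (induction k) (auto simp: adj_def)

lemma finite_players[simp]: "finite (players n)"
  by (simp add: players_def)

lemma card_players[simp]: "card (players n) = n"
  by (simp add: players_def)

lemma profile_sub: "S \<in> profiles n \<Longrightarrow> S u \<subseteq> players n"
  unfolding profiles_def by (auto split: if_splits)

lemma profile_out: "S \<in> profiles n \<Longrightarrow> x \<notin> players n \<Longrightarrow> S x = {}"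
  unfolding profiles_def by (metis (mono_tags, lifting) mem_Collect_eq subset_empty)

lemma profiles_finite: "finite (profiles n)"
proof -
  have "profiles n \<subseteq> (\<lambda>f u. if u \<in> players n then f u else {}) ` (PiE (players n) (\<lambda>_. Pow (players n)))"
  proof
    fix S assume S: "S \<in> profiles n"
    have "S = (\<lambda>u. if u \<in> players n then restrict S (players n) u else {})"
    proof
      fix u show "S u = (if u \<in> players n then restrict S (players n) u else {})"
        using profile_out[OF S, of u] by simp
    qed
    moreover have "restrict S (players n) \<in> PiE (players n) (\<lambda>_. Pow (players n))"
      using profile_sub[OF S] by (simp add: restrict_PiE_iff)
    ultimately show "S \<in> (\<lambda>f u. if u \<in> players n then f u else {}) ` (PiE (players n) (\<lambda>_. Pow (players n)))"
      by blast
  qed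
  moreover have "finite (PiE (players n) (\<lambda>_. Pow (players n)))"
    by (intro finite_PiE) auto
  ultimately show ?thesis by (meson finite_imageI finite_subset)
qed

lemma sum_card_ge:
  assumes S: "S \<in> profiles n"
  shows "real (card {u\<in>players n. \<exists>x. adj S u x}) \<le> 2 * (\<Sum>u\<in>players n. real (card (S u)))"
proof -
  define P where "P = Sigma (players n) S"
  have fP: "finite P" unfolding P_def using profile_sub[OF S]
    by (meson finite_SigmaI finite_players finite_subset)
  have cP: "card P = (\<Sum>u\<in>players n. card (S u))"
    unfolding P_def using profile_sub[OF S]
    using finite_subset[OF profile_sub[OF S] finite_players] by (intro card_SigmaI) auto
  have "{u\<in>players n. \<exists>x. adj S u x} \<subseteq> fst ` P \<union> snd ` P"
  proof
    fix u assume "u \<in> {u\<in>players n. \<exists>x. adj S u x}"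
    then obtain x where u: "u \<in> players n" and "adj S u x" by auto
    then consider "u \<in> S x" | "x \<in> S u" by (auto simp: adj_def)
    then show "u \<in> fst ` P \<union> snd ` P"
    proof cases
      case 1
      then have "x \<in> players n" using profile_out[OF S] by auto
      then have "(x,u) \<in> P" using 1 by (auto simp: P_def)
      then show ?thesis by force
    next
      case 2
      then have "(u,x) \<in> P" using u by (auto simp: P_def)
      then show ?thesis by force
    qed
  qed
  then have "card {u\<in>players n. \<exists>x. adj S u x} \<le> card (fst ` P \<union> snd ` P)"
    using fP by (intro card_mono) auto
  also have "\<dots> \<le> card (fst ` P) + card (snd ` P)" by (rule card_Un_le)
  also have "\<dots> \<le> card P + card P" using fP by (intro add_mono card_image_le) auto
  finally have "card {u\<in>players n. \<exists>x. adj S u x} \<le> 2 * card P" by simp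
  then have "real (card {u\<in>players n. \<exists>x. adj S u x}) \<le> real (2 * card P)" by (simp only: of_nat_le_iff)
  then show ?thesis unfolding cP by simp
qed

lemma sum_sub_le:
  assumes "\<forall>u\<in>players n. w u > 0" "A \<subseteq> players n"
  shows "(\<Sum>v\<in>A. w v) \<le> (\<Sum>u\<in>players n. (w u::real))"
  apply (rule sum_mono2)
  using assms by (auto simp: players_def less_imp_le)

lemma opt_lb:
  assumes S: "S \<in> profiles n" and w: "\<forall>u\<in>players n. w u > 0" and a: "\<alpha> > 0" "\<alpha> \<le> (\<Sum>u\<in>players n. w u)"
    and n: "n \<ge> 2"
  shows "\<alpha> * real n / 2 \<le> social_cost n w \<alpha> \<beta> S"
proof -
  define W where "W = (\<Sum>u\<in>players n. w u)"
  define J where "J = {u\<in>players n. \<exists>x. adj S u x}"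
  define I where "I = players n - J"
  define F where "F u = {v\<in>players n. \<not> dist_le S \<beta> u v}" for u
  have JI: "players n = I \<union> J" "I \<inter> J = {}" "finite I" "finite J"
    unfolding I_def J_def by auto
  have cn: "real n = real (card I) + real (card J)"
    using JI card_Un_disjoint by (metis card_players of_nat_add)
  have farI: "(\<Sum>v\<in>F u. w v) = W - w u" if u: "u \<in> I" for u
  proof -
    have iso: "\<forall>x. \<not> adj S u x" using u by (auto simp: I_def J_def)
    have "F u = players n - {u}"
      unfolding F_def using dist_iso[OF iso] dist_refl by blast
    then show ?thesis using u JI unfolding W_def
      by (simp add: sum_diff1)
  qed
  have farJ: "(\<Sum>v\<in>I. w v) \<le> (\<Sum>v\<in>F j. w v)" if j: "j \<in> J" for j
  proof -
    have "I \<subseteq> F j"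
    proof
      fix u assume u: "u \<in> I"
      have iso: "\<forall>x. \<not> adj S u x" using u by (auto simp: I_def J_def)
      show "u \<in> F j" using u j dist_iso2[OF iso, of \<beta> j] unfolding F_def I_def by auto
    qed
    then show ?thesis using w JI by (intro sum_mono2) (auto simp: F_def intro: less_imp_le)
  qed
  define WI where "WI = (\<Sum>v\<in>I. w v)"
  have WI0: "0 \<le> WI" unfolding WI_def using w JI by (intro sum_nonneg) (auto intro: less_imp_le)
  have sc0: "social_cost n w \<alpha> \<beta> S = \<alpha> * (\<Sum>u\<in>players n. real (card (S u))) + (\<Sum>u\<in>players n. (\<Sum>v\<in>F u. w v))"
    unfolding social_cost_def player_cost_def F_def by (simp only: sum.distrib sum_distrib_left)
  have sc1: "(\<Sum>u\<in>players n. (\<Sum>v\<in>F u. w v)) = (\<Sum>u\<in>I. (\<Sum>v\<in>F u. w v)) + (\<Sum>u\<in>J. (\<Sum>v\<in>F u. w v))"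
    unfolding JI(1) by (rule sum.union_disjoint[OF JI(3) JI(4) JI(2)])
  have sc: "social_cost n w \<alpha> \<beta> S = \<alpha> * (\<Sum>u\<in>players n. real (card (S u))) + ((\<Sum>u\<in>I. (\<Sum>v\<in>F u. w v)) + (\<Sum>u\<in>J. (\<Sum>v\<in>F u. w v)))"
    using sc0 sc1 by simp
  have s1: "(\<Sum>u\<in>I. (\<Sum>v\<in>F u. w v)) = real (card I) * W - WI"
    using farI by (simp add: sum_subtractf WI_def)
  have s2: "real (card J) * WI \<le> (\<Sum>u\<in>J. (\<Sum>v\<in>F u. w v))"
    using sum_mono[of J "\<lambda>_. WI" "\<lambda>u. (\<Sum>v\<in>F u. w v)"] farJ unfolding WI_def by simp
  have s3: "\<alpha> * real (card J) / 2 \<le> \<alpha> * (\<Sum>u\<in>players n. real (card (S u)))"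
    using sum_card_ge[OF S] a unfolding J_def[symmetric] by simp
  have key: "\<alpha> * real n / 2 \<le> \<alpha> * real (card J) / 2 + (real (card I) * W - WI + real (card J) * WI)"
  proof (cases "J = {}")
    case True
    then have "I = players n" using JI by auto
    then have "card I = n" "WI = W" unfolding WI_def W_def by auto
    moreover have "(real n - 1) * \<alpha> \<le> (real n - 1) * W"
      using a n unfolding W_def by (intro mult_left_mono) auto
    moreover have "\<alpha> * (real n / 2) \<le> \<alpha> * (real n - 1)"
      using a n by (intro mult_left_mono) auto
    ultimately show ?thesis using True n a by (simp add: algebra_simps)
  next
    case False
    then have "card J \<ge> 1" using JI by (simp add: Suc_leI card_gt_0_iff)
    then have "1 * WI \<le> real (card J) * WI" using WI0
      by (intro mult_right_mono) auto
    then have "WI \<le> real (card J) * WI" by simp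
    moreover have "\<alpha> * real (card I) \<le> W * real (card I)"
      using a unfolding W_def by (intro mult_right_mono) auto
    moreover have "0 \<le> \<alpha> * real (card I)" using a by simp
    moreover have "\<alpha> * real n = \<alpha> * real (card I) + \<alpha> * real (card J)"
      using cn by (simp add: distrib_left)
    moreover have "real (card I) * W = W * real (card I)" by simp
    ultimately show ?thesis by linarith
  qed
  show ?thesis using key sc s1 s2 s3 by linarith
qed

lemma NE_player_le:
  assumes "is_NE n w \<alpha> \<beta> S" "\<forall>u\<in>players n. w u > 0" "u \<in> players n"
  shows "player_cost n w \<alpha> \<beta> S u \<le> (\<Sum>u\<in>players n. w u)"
proof -
  have "player_cost n w \<alpha> \<beta> S u \<le> player_cost n w \<alpha> \<beta> (S(u := {})) u"
    using assms(1,3) unfolding is_NE_def by blast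
  also have "\<dots> = (\<Sum>v\<in>{v\<in>players n. \<not> dist_le (S(u := {})) \<beta> u v}. w v)"
    unfolding player_cost_def by simp
  also have "\<dots> \<le> (\<Sum>u\<in>players n. w u)"
    by (rule sum_sub_le[OF assms(2)]) blast
  finally show ?thesis .
qed

lemma NE_sc_le:
  assumes "is_NE n w \<alpha> \<beta> S" "\<forall>u\<in>players n. w u > 0"
  shows "social_cost n w \<alpha> \<beta> S \<le> real n * (\<Sum>u\<in>players n. w u)"
proof -
  have "social_cost n w \<alpha> \<beta> S \<le> (\<Sum>u\<in>players n. (\<Sum>u\<in>players n. w u))"
    unfolding social_cost_def by (rule sum_mono) (rule NE_player_le[OF assms])
  then show ?thesis by simp
qed

lemma star_alpha:
  assumes ne: "is_NE n w \<alpha> \<beta> S" and con: "outcome_connected n S" and n: "n \<ge> 2"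
    and w: "\<forall>u\<in>players n. w u > 0" and a: "\<alpha> > 0"
  shows "\<alpha> \<le> (\<Sum>u\<in>players n. w u)"
proof -
  have S: "S \<in> profiles n" using ne by (simp add: is_NE_def)
  have p12: "1 \<in> players n" "2 \<in> players n" using n by (auto simp: players_def)
  then obtain k where k: "dist_le S k 1 2" using con unfolding outcome_connected_def by blast
  have "\<not> (\<forall>x. \<not> adj S 1 x)"
  proof
    assume iso: "\<forall>x. \<not> adj S 1 x"
    have "(2::nat) = 1" using dist_iso[OF iso k] .
    then show False by simp
  qed
  then obtain x where "adj S 1 x" by blast
  then have "x \<in> S 1 \<or> 1 \<in> S x" unfolding adj_def by blast
  then obtain b x where bx: "x \<in> S b" by blast
  have b: "b \<in> players n" using bx profile_out[OF S] by blast
  have "finite (S b)" using finite_subset[OF profile_sub[OF S] finite_players] .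
  then have "card (S b) > 0" using bx card_gt_0_iff by blast
  then have "card (S b) \<ge> 1" by simp
  then have c1: "\<alpha> * 1 \<le> \<alpha> * real (card (S b))" using a by (intro mult_left_mono) auto
  have c2: "0 \<le> (\<Sum>v \<in> {v \<in> players n. \<not> dist_le S \<beta> b v}. w v)"
    using w by (intro sum_nonneg) (auto intro: less_imp_le)
  have "\<alpha> \<le> player_cost n w \<alpha> \<beta> S b"
    unfolding player_cost_def using c1 c2 by linarith
  also have "\<dots> \<le> (\<Sum>u\<in>players n. w u)" using NE_player_le[OF ne w b] .
  finally show ?thesis .
qed

theorem lemma1:
  "\<exists>c::real. c > 0 \<and>
     (\<forall>(n::nat) (w::nat \<Rightarrow> real) (\<alpha>::real) (\<beta>::nat).
        celebrity_game n w \<alpha> \<beta> \<and> star_game n w \<alpha> \<beta> \<and> \<beta> > 1 \<longrightarrow>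
        PoA n w \<alpha> \<beta> \<le> c * (\<Sum>u \<in> players n. w u) / \<alpha>)"
proof (intro exI[of _ 2] conjI allI impI)
  fix n w \<alpha> \<beta>
  assume h: "celebrity_game n w \<alpha> \<beta> \<and> star_game n w \<alpha> \<beta> \<and> (\<beta>::nat) > 1"
  define W where "W = (\<Sum>u \<in> players n. w u)"
  have w: "\<forall>u\<in>players n. w u > 0" and a: "\<alpha> > 0" and n: "n \<ge> 2"
    using h unfolding celebrity_game_def by auto
  obtain S0 where S0: "is_NE n w \<alpha> \<beta> S0" "outcome_connected n S0"
    using h unfolding star_game_def by auto
  have aW: "\<alpha> \<le> W" unfolding W_def using star_alpha[OF S0 n w a] .
  have S0p: "S0 \<in> profiles n" using S0 by (simp add: is_NE_def)
  have optlb: "\<alpha> * real n / 2 \<le> opt n w \<alpha> \<beta>"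
    unfolding opt_def using profiles_finite S0p opt_lb[OF _ w a aW[unfolded W_def] n]
    by (subst Min_ge_iff) auto
  have optpos: "0 < \<alpha> * real n / 2" using a n by simp
  have W0: "0 \<le> W" using a aW by simp
  have finNE: "finite {S. is_NE n w \<alpha> \<beta> S}"
    using profiles_finite by (rule finite_subset[rotated]) (auto simp: is_NE_def)
  have "PoA n w \<alpha> \<beta> \<le> 2 * W / \<alpha>"
    unfolding PoA_def
  proof (subst Max_le_iff)
    show "finite ((\<lambda>S. social_cost n w \<alpha> \<beta> S / opt n w \<alpha> \<beta>) ` {S. is_NE n w \<alpha> \<beta> S})"
      using finNE by simp
    show "(\<lambda>S. social_cost n w \<alpha> \<beta> S / opt n w \<alpha> \<beta>) ` {S. is_NE n w \<alpha> \<beta> S} \<noteq> {}"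
      using S0 by auto
    show "\<forall>x\<in>(\<lambda>S. social_cost n w \<alpha> \<beta> S / opt n w \<alpha> \<beta>) ` {S. is_NE n w \<alpha> \<beta> S}. x \<le> 2 * W / \<alpha>"
    proof safe
      fix S assume "is_NE n w \<alpha> \<beta> S"
      then have sc: "social_cost n w \<alpha> \<beta> S \<le> real n * W" using NE_sc_le w unfolding W_def by blast
      have "social_cost n w \<alpha> \<beta> S / opt n w \<alpha> \<beta> \<le> real n * W / opt n w \<alpha> \<beta>"
        using sc optlb optpos by (intro divide_right_mono) auto
      also have "\<dots> \<le> real n * W / (\<alpha> * real n / 2)"
        using optlb optpos W0 by (intro divide_left_mono) auto
      also have "\<dots> = 2 * W / \<alpha>" using a n by (simp add: field_simps)
      finally show "social_cost n w \<alpha> \<beta> S / opt n w \<alpha> \<beta> \<le> 2 * W / \<alpha>" .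
    qed
  qed
  then show "PoA n w \<alpha> \<beta> \<le> 2 * (\<Sum>u \<in> players n. w u) / \<alpha>" unfolding W_def .
qed simp

end
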